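(* Let $C$ be an $E$-linear code of length $2n$. Then (1) $(LSHull(C))_{Res}=C_{Res}\cap (C_{Res})^{\perp_S}$ and $(LSHull(C))_{Tor}=(C_{Res})^{\perp_S}\cap C_{Tor}$; (2) $(RSHull(C))_{Res}=C_{Res}\cap (C_{Tor})^{\perp_S}$ and $(RSHull(C))_{Tor}=C_{Tor}$; (3) $(SHull(C))_{Res}=C_{Res}\cap (C_{Tor})^{\perp_S}$ and $(SHull(C))_{Tor}=(C_{Res})^{\perp_S}\cap C_{Tor}$.
   Context: $E=\langle \kappa,\tau \mid 2\kappa=2\tau=0,\ \kappa^2=\kappa,\ \tau^2=\tau,\ \kappa\tau=\kappa,\ \tau\kappa=\tau\rangle$ is the non-unital noncommutative ring with four elements $\{0,\kappa,\tau,\zeta\}$, $\zeta=\kappa+\tau$; for every $e\in E$ one has $e\kappa=e\tau=e$ and $e\zeta=0$. Every $e\in E$ is uniquely $e=u\kappa+v\zeta$ with $u,v\in\mathbb{F}_2$, and $\pi:E\to\mathbb{F}_2$, $\pi(u\kappa+v\zeta)=u$, is extended componentwise to $E^{m}\to\mathbb{F}_2^m$. $\mathbb{F}_2$ acts on $E$ by $0\cdot e=0$, $1\cdot e=e$; for $v\in\mathbb{F}_2^m$ and $e\in E$, $ev=(ev_1,\dots,ev_m)\in E^m$. An $E$-linear code of length $2n$ is a left $E$-submodule $C$ of $E^{2n}$. Its residue code is $C_{Res}=\pi(C)$ and its torsion code is $C_{Tor}=\{v\in\mathbb{F}_2^{2n}: \zeta v\in C\}$ (both binary linear codes). The symplectic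 inner product of $x=(u|v)$, $y=(u'|v')$ (with $u,v,u',v'$ of length $n$, over $E$ or over $\mathbb{F}_2$) is $\langle x,y\rangle_s=\sum_{i=1}^n u_iv'_i+\sum_{i=1}^n v_iu'_i$ (order of factors as written). For a binary linear code $B\subseteq\mathbb{F}_2^{2n}$, $B^{\perp_S}=\{z\in\mathbb{F}_2^{2n}:\langle z,w\rangle_s=0\ \forall w\in B\}$. For an $E$-linear code $C$: $C^{\perp_{S_L}}=\{z\in E^{2n}:\langle z,w\rangle_s=0\ \forall w\in C\}$, $C^{\perp_{S_R}}=\{z\in E^{2n}:\langle w,z\rangle_s=0\ \forall w\in C\}$, $C^{\perp_S}=C^{\perp_{S_L}}\cap C^{\perp_{S_R}}$, and $LSHull(C)=C\cap C^{\perp_{S_L}}$, $RSHull(C)=C\cap C^{\perp_{S_R}}$, $SHull(C)=C\cap C^{\perp_S}$ (these are again $E$-linear codes, so their residue and torsion codes are defined). *)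

theory Defs
  imports Main
begin

text \<open>The four-element non-unital ring E = {0, kappa, tau, zeta}, zeta = kappa + tau.
  Elements are identified with their unique coordinates e = u*kappa + v*zeta, u,v in F2
  (F2 modelled by bool, addition = xor, multiplication = conjunction).\<close>

datatype E = E0 | Kap | Tau | Zet

fun E_u :: "E \<Rightarrow> bool" where
  "E_u E0 = False" | "E_u Kap = True" | "E_u Tau = True" | "E_u Zet = False"

fun E_v :: "E \<Rightarrow> bool" where
  "E_v E0 = False" | "E_v Kap = False" | "E_v Tau = True" | "E_v Zet = True"

definition E_of_uv :: "bool \<Rightarrow> bool \<Rightarrow> E" where
  "E_of_uv u v = (if u then (if v then Tau else Kap) else (if v then Zet else E0))"

definition eadd :: "E \<Rightarrow> E \<Rightarrow> E" where
  "eadd x y = E_of_uv (E_u x \<noteq> E_u y) (E_v x \<noteq> E_v y)"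

text \<open>Multiplication determined by the presentation: kappa^2 = kappa, tau^2 = tau,
  kappa tau = kappa, tau kappa = tau; equivalently e*kappa = e*tau = e, e*zeta = 0,
  i.e. x * y = u(y) x.\<close>
definition emul :: "E \<Rightarrow> E \<Rightarrow> E" where
  "emul x y = (if E_u y then x else E0)"

definition piE :: "E \<Rightarrow> bool" where "piE e = E_u e"

definition piV :: "E list \<Rightarrow> bool list" where "piV x = map piE x"

definition bsmul :: "bool \<Rightarrow> E \<Rightarrow> E" where
  "bsmul b e = (if b then e else E0)"

definition evec :: "E \<Rightarrow> bool list \<Rightarrow> E list" where
  "evec e v = map (\<lambda>b. bsmul b e) v"

definition lsmul :: "E \<Rightarrow> E list \<Rightarrow> E list" where
  "lsmul e x = map (emul e) x"

definition vadd :: "E list \<Rightarrow> E list \<Rightarrow> E list" where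
  "vadd x y = map2 eadd x y"

definition E_linear :: "nat \<Rightarrow> E list set \<Rightarrow> bool" where
  "E_linear n C \<longleftrightarrow> C \<subseteq> {x. length x = 2*n} \<and> replicate (2*n) E0 \<in> C
     \<and> (\<forall>x\<in>C. \<forall>y\<in>C. vadd x y \<in> C)
     \<and> (\<forall>e. \<forall>x\<in>C. lsmul e x \<in> C)"

definition Res :: "E list set \<Rightarrow> bool list set" where
  "Res C = piV ` C"

definition Tor :: "nat \<Rightarrow> E list set \<Rightarrow> bool list set" where
  "Tor n C = {v. length v = 2*n \<and> evec Zet v \<in> C}"

definition esum :: "E list \<Rightarrow> E" where
  "esum xs = foldr eadd xs E0"

definition sympE :: "nat \<Rightarrow> E list \<Rightarrow> E list \<Rightarrow> E" where
  "sympE n x y = eadd (esum (map (\<lambda>i. emul (x ! i) (y ! (n + i))) [0..<n]))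
                      (esum (map (\<lambda>i. emul (x ! (n + i)) (y ! i)) [0..<n]))"

definition bsum :: "bool list \<Rightarrow> bool" where
  "bsum xs = foldr (\<lambda>a b. a \<noteq> b) xs False"

definition sympB :: "nat \<Rightarrow> bool list \<Rightarrow> bool list \<Rightarrow> bool" where
  "sympB n x y = (bsum (map (\<lambda>i. x ! i \<and> y ! (n + i)) [0..<n])
                  \<noteq> bsum (map (\<lambda>i. x ! (n + i) \<and> y ! i) [0..<n]))"

definition Sdual :: "nat \<Rightarrow> bool list set \<Rightarrow> bool list set" where
  "Sdual n B = {z. length z = 2*n \<and> (\<forall>w\<in>B. sympB n z w = False)}"

definition SdualL :: "nat \<Rightarrow> E list set \<Rightarrow> E list set" where
  "SdualL n C = {z. length z = 2*n \<and> (\<forall>w\<in>C. sympE n z w = E0)}"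

definition SdualR :: "nat \<Rightarrow> E list set \<Rightarrow> E list set" where
  "SdualR n C = {z. length z = 2*n \<and> (\<forall>w\<in>C. sympE n w z = E0)}"

definition SdualE :: "nat \<Rightarrow> E list set \<Rightarrow> E list set" where
  "SdualE n C = SdualL n C \<inter> SdualR n C"

definition LSHull :: "nat \<Rightarrow> E list set \<Rightarrow> E list set" where
  "LSHull n C = C \<inter> SdualL n C"

definition RSHull :: "nat \<Rightarrow> E list set \<Rightarrow> E list set" where
  "RSHull n C = C \<inter> SdualR n C"

definition SHull :: "nat \<Rightarrow> E list set \<Rightarrow> E list set" where
  "SHull n C = C \<inter> SdualE n C"

end

theory Submission
  imports Defs
begin

definition UU :: "E list \<Rightarrow> bool list" where "UU x = map E_u x"
definition VV :: "E list \<Rightarrow> bool list" where "VV x = map E_v x"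

lemma Eu_add[simp]: "E_u (eadd x y) = (E_u x \<noteq> E_u y)"
  by (cases x; cases y; simp add: eadd_def E_of_uv_def)
lemma Ev_add[simp]: "E_v (eadd x y) = (E_v x \<noteq> E_v y)"
  by (cases x; cases y; simp add: eadd_def E_of_uv_def)
lemma Eu_mul[simp]: "E_u (emul x y) = (E_u x \<and> E_u y)"
  by (cases x; cases y; simp add: emul_def)
lemma Ev_mul[simp]: "E_v (emul x y) = (E_v x \<and> E_u y)"
  by (cases x; cases y; simp add: emul_def)

lemma Eu_sum: "E_u (esum xs) = bsum (map E_u xs)"
  by (induction xs) (auto simp: esum_def bsum_def)
lemma Ev_sum: "E_v (esum xs) = bsum (map E_v xs)"
  by (induction xs) (auto simp: esum_def bsum_def)

lemma E_eq0: "(e = E0) = (\<not> E_u e \<and> \<not> E_v e)"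
  by (cases e) auto

lemma sympE_u: assumes "length x = 2*n" "length y = 2*n"
  shows "E_u (sympE n x y) = sympB n (UU x) (UU y)"
proof -
  have a: "map (\<lambda>i. E_u (x ! i) \<and> E_u (y ! (n + i))) [0..<n] = map (\<lambda>i. UU x ! i \<and> UU y ! (n + i)) [0..<n]"
    using assms by (auto simp: UU_def)
  have b: "map (\<lambda>i. E_u (x ! (n+i)) \<and> E_u (y ! i)) [0..<n] = map (\<lambda>i. UU x ! (n+i) \<and> UU y ! i) [0..<n]"
    using assms by (auto simp: UU_def)
  show ?thesis unfolding sympB_def a[symmetric] b[symmetric] by (simp add: sympE_def Eu_sum o_def)
qed

lemma sympE_v: assumes "length x = 2*n" "length y = 2*n"
  shows "E_v (sympE n x y) = sympB n (VV x) (UU y)"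
proof -
  have a: "map (\<lambda>i. E_v (x ! i) \<and> E_u (y ! (n + i))) [0..<n] = map (\<lambda>i. VV x ! i \<and> UU y ! (n + i)) [0..<n]"
    using assms by (auto simp: UU_def VV_def)
  have b: "map (\<lambda>i. E_v (x ! (n+i)) \<and> E_u (y ! i)) [0..<n] = map (\<lambda>i. VV x ! (n+i) \<and> UU y ! i) [0..<n]"
    using assms by (auto simp: UU_def VV_def)
  show ?thesis unfolding sympB_def a[symmetric] b[symmetric] by (simp add: sympE_def Ev_sum o_def)
qed

lemma sympE_0: assumes "length x = 2*n" "length y = 2*n"
  shows "(sympE n x y = E0) = (\<not> sympB n (UU x) (UU y) \<and> \<not> sympB n (VV x) (UU y))"
  using sympE_u[OF assms] sympE_v[OF assms] E_eq0 by metis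

lemma sympB_sym: "sympB n x y = sympB n y x"
proof -
  have a: "map (\<lambda>i. x ! i \<and> y ! (n + i)) [0..<n] = map (\<lambda>i. y ! (n + i) \<and> x ! i) [0..<n]" by auto
  have b: "map (\<lambda>i. x ! (n+i) \<and> y ! i) [0..<n] = map (\<lambda>i. y ! i \<and> x ! (n+i)) [0..<n]" by auto
  show ?thesis unfolding sympB_def a b by auto
qed

lemma bsum_F: "bsum (map (\<lambda>_. False) xs) = False"
  by (induction xs) (auto simp: bsum_def)

lemma sympB_zero: "sympB n (replicate (2*n) False) w = False"
proof -
  have a: "map (\<lambda>i. replicate (2*n) False ! i \<and> w ! (n + i)) [0..<n] = map (\<lambda>_. False) [0..<n]" by auto
  have b: "map (\<lambda>i. replicate (2*n) False ! (n+i) \<and> w ! i) [0..<n] = map (\<lambda>_. False) [0..<n]" by auto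
  show ?thesis unfolding sympB_def a b bsum_F by simp
qed

lemma zero_Sdual: "replicate (2*n) False \<in> Sdual n B"
  by (simp add: Sdual_def sympB_zero)

lemma evec_UV: "UU (evec Zet v) = replicate (length v) False" "VV (evec Zet v) = v"
  by (induction v) (auto simp: UU_def VV_def evec_def bsmul_def)

definition mk :: "bool list \<Rightarrow> bool list \<Rightarrow> E list" where
  "mk a b = map2 E_of_uv a b"

lemma mk_UV: "x = mk (UU x) (VV x)"
proof -
  have "\<And>e. e = E_of_uv (E_u e) (E_v e)" by (case_tac e) (auto simp: E_of_uv_def)
  then show ?thesis unfolding mk_def UU_def VV_def
    by (induction x) auto
qed

lemma mk_sum: assumes "length a = length b"
  shows "vadd (evec Kap a) (evec Zet b) = mk a b"
  using assms unfolding vadd_def evec_def mk_def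
  by (induction a b rule: list_induct2) (auto simp: eadd_def bsmul_def E_of_uv_def)

lemma UV_mk: assumes "length a = length b"
  shows "UU (mk a b) = a" "VV (mk a b) = b" "length (mk a b) = length a"
  using assms unfolding mk_def UU_def VV_def
  by (induction a b rule: list_induct2) (auto simp: E_of_uv_def)

lemma lsmul_Zet: "lsmul Zet x = evec Zet (UU x)"
  by (simp add: lsmul_def evec_def UU_def emul_def bsmul_def)
lemma lsmul_Kap: "lsmul Kap x = evec Kap (UU x)"
  by (simp add: lsmul_def evec_def UU_def emul_def bsmul_def)

lemma vadd_Kap: "vadd x (evec Kap (UU x)) = evec Zet (VV x)"
  unfolding vadd_def evec_def UU_def VV_def
  by (induction x) (auto simp: eadd_def bsmul_def E_of_uv_def split: E.splits)

lemma C_char: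
  assumes L: "E_linear n C"
  shows "(x \<in> C) = (length x = 2*n \<and> UU x \<in> Res C \<and> VV x \<in> Tor n C)"
    and "Res C = UU ` C"
    and "Res C \<subseteq> Tor n C"
    and "a \<in> Tor n C \<Longrightarrow> evec Zet a \<in> C"
proof -
  have len: "\<And>x. x \<in> C \<Longrightarrow> length x = 2*n" using L by (auto simp: E_linear_def)
  show RC: "Res C = UU ` C" by (simp add: Res_def piV_def UU_def piE_def[abs_def])
  show "Res C \<subseteq> Tor n C"
  proof
    fix a assume "a \<in> Res C"
    then obtain x where x: "x \<in> C" "a = UU x" using RC by auto
    then have "lsmul Zet x \<in> C" using L by (auto simp: E_linear_def)
    then show "a \<in> Tor n C" using x len by (auto simp: Tor_def lsmul_Zet UU_def)
  qed
  show "a \<in> Tor n C \<Longrightarrow> evec Zet a \<in> C" by (simp add: Tor_def)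
  show "(x \<in> C) = (length x = 2*n \<and> UU x \<in> Res C \<and> VV x \<in> Tor n C)"
  proof
    assume x: "x \<in> C"
    have "lsmul Kap x \<in> C" using L x by (auto simp: E_linear_def)
    then have "vadd x (evec Kap (UU x)) \<in> C" using L x by (auto simp: E_linear_def lsmul_Kap)
    then have "evec Zet (VV x) \<in> C" by (simp add: vadd_Kap)
    then show "length x = 2*n \<and> UU x \<in> Res C \<and> VV x \<in> Tor n C"
      using x len RC by (auto simp: Tor_def VV_def)
  next
    assume h: "length x = 2*n \<and> UU x \<in> Res C \<and> VV x \<in> Tor n C"
    then obtain y where y: "y \<in> C" "UU x = UU y" using RC by auto
    have "lsmul Kap y \<in> C" using L y by (auto simp: E_linear_def)
    moreover have "evec Zet (VV x) \<in> C" using h by (simp add: Tor_def)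
    ultimately have "vadd (evec Kap (UU x)) (evec Zet (VV x)) \<in> C"
      using L y by (auto simp: E_linear_def lsmul_Kap)
    moreover have "length (UU x) = length (VV x)" by (simp add: UU_def VV_def)
    ultimately show "x \<in> C" using mk_sum mk_UV by metis
  qed
qed

lemma lens:
  assumes L: "E_linear n C"
  shows "a \<in> Tor n C \<Longrightarrow> length a = 2*n" "a \<in> Res C \<Longrightarrow> length a = 2*n"
    "x \<in> C \<Longrightarrow> length x = 2*n"
  using L C_char(3)[OF L] by (auto simp: Tor_def E_linear_def)

lemma lenUV[simp]: "length (UU x) = length x" "length (VV x) = length x"
  by (auto simp: UU_def VV_def)

lemma SL_char:
  assumes L: "E_linear n C" and lx: "length x = 2*n"
  shows "(x \<in> SdualL n C) = (UU x \<in> Sdual n (Res C) \<and> VV x \<in> Sdual n (Res C))"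
proof -
  have "(x \<in> SdualL n C) = (\<forall>w\<in>C. \<not> sympB n (UU x) (UU w) \<and> \<not> sympB n (VV x) (UU w))"
    using lx lens(3)[OF L] by (auto simp: SdualL_def sympE_0)
  also have "\<dots> = (UU x \<in> Sdual n (Res C) \<and> VV x \<in> Sdual n (Res C))"
    using lx C_char(2)[OF L] by (auto simp: Sdual_def)
  finally show ?thesis .
qed

lemma SR_char:
  assumes L: "E_linear n C" and lx: "length x = 2*n"
  shows "(x \<in> SdualR n C) = (UU x \<in> Sdual n (Tor n C))"
proof -
  have "(x \<in> SdualR n C) = (\<forall>w\<in>C. \<not> sympB n (UU w) (UU x) \<and> \<not> sympB n (VV w) (UU x))"
    using lx lens(3)[OF L] by (auto simp: SdualR_def sympE_0)
  also have "\<dots> = (UU x \<in> Sdual n (Tor n C))"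
  proof
    assume h: "\<forall>w\<in>C. \<not> sympB n (UU w) (UU x) \<and> \<not> sympB n (VV w) (UU x)"
    { fix t assume t: "t \<in> Tor n C"
      then have "evec Zet t \<in> C" using C_char(4)[OF L] by blast
      then have "\<not> sympB n (UU x) t" using h evec_UV(2)[of t] sympB_sym by metis }
    then show "UU x \<in> Sdual n (Tor n C)" using lx by (auto simp: Sdual_def)
  next
    assume h: "UU x \<in> Sdual n (Tor n C)"
    show "\<forall>w\<in>C. \<not> sympB n (UU w) (UU x) \<and> \<not> sympB n (VV w) (UU x)"
    proof
      fix w assume "w \<in> C"
      then have "UU w \<in> Res C" "VV w \<in> Tor n C" using C_char(1)[OF L, of w] by auto
      then have "UU w \<in> Tor n C" "VV w \<in> Tor n C" using C_char(3)[OF L] by auto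
      then show "\<not> sympB n (UU w) (UU x) \<and> \<not> sympB n (VV w) (UU x)"
        using h sympB_sym unfolding Sdual_def by blast
    qed
  qed
  finally show ?thesis .
qed

lemma ResH: "Res H = UU ` H" by (simp add: Res_def piV_def UU_def piE_def[abs_def])

lemma res_gen:
  assumes L: "E_linear n C"
    and P0: "\<forall>x. length x = 2*n \<longrightarrow> (x \<in> H) = (UU x \<in> A \<and> VV x \<in> B)"
    and z: "replicate (2*n) False \<in> B" and A0: "\<forall>a. a \<in> A \<longrightarrow> length a = 2*n"
    and Hl0: "\<forall>x. x \<in> H \<longrightarrow> length x = 2*n"
  shows "Res H = A" "Tor n H = {v. length v = 2*n \<and> replicate (2*n) False \<in> A \<and> v \<in> B}"
proof -
  have P: "\<And>x. length x = 2*n \<Longrightarrow> (x \<in> H) = (UU x \<in> A \<and> VV x \<in> B)" using P0 by blast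
  have A: "\<And>a. a \<in> A \<Longrightarrow> length a = 2*n" and Hl: "\<And>x. x \<in> H \<Longrightarrow> length x = 2*n"
    using A0 Hl0 by blast+
  show "Res H = A"
  proof
    show "Res H \<subseteq> A" using P Hl by (auto simp: ResH)
    show "A \<subseteq> Res H"
    proof
      fix a assume a: "a \<in> A"
      let ?x = "mk a (replicate (2*n) False)"
      have "?x \<in> H" using P[of ?x] UV_mk[of a "replicate (2*n) False"] A[OF a] a z by simp
      then show "a \<in> Res H" unfolding ResH using UV_mk[of a "replicate (2*n) False"] A[OF a] by force
    qed
  qed
  show "Tor n H = {v. length v = 2*n \<and> replicate (2*n) False \<in> A \<and> v \<in> B}"
    using P evec_UV by (auto simp: Tor_def evec_def)
qed

theorem mainTheorem1:
  assumes "E_linear n C"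
  shows "Res (LSHull n C) = Res C \<inter> Sdual n (Res C)
       \<and> Tor n (LSHull n C) = Sdual n (Res C) \<inter> Tor n C
       \<and> Res (RSHull n C) = Res C \<inter> Sdual n (Tor n C)
       \<and> Tor n (RSHull n C) = Tor n C
       \<and> Res (SHull n C) = Res C \<inter> Sdual n (Tor n C)
       \<and> Tor n (SHull n C) = Sdual n (Res C) \<inter> Tor n C"
proof -
  note L = assms
  have zR: "replicate (2*n) False \<in> Res C"
  proof -
    have "replicate (2*n) E0 \<in> C" using L by (simp add: E_linear_def)
    moreover have "UU (replicate (2*n) E0) = replicate (2*n) False" by (simp add: UU_def)
    ultimately show ?thesis unfolding ResH by force
  qed
  have zT: "replicate (2*n) False \<in> Tor n C" using zR C_char(3)[OF L] by blast
  have zS: "\<And>B. replicate (2*n) False \<in> Sdual n B" by (rule zero_Sdual)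
  have lS: "\<And>a B. a \<in> Sdual n B \<Longrightarrow> length a = 2*n" by (simp add: Sdual_def)
  have PL: "\<forall>x. length x = 2*n \<longrightarrow> (x \<in> LSHull n C) = (UU x \<in> Res C \<inter> Sdual n (Res C) \<and> VV x \<in> Sdual n (Res C) \<inter> Tor n C)"
    using C_char(1)[OF L] SL_char[OF L] by (auto simp: LSHull_def)
  have PR: "\<forall>x. length x = 2*n \<longrightarrow> (x \<in> RSHull n C) = (UU x \<in> Res C \<inter> Sdual n (Tor n C) \<and> VV x \<in> Tor n C)"
    using C_char(1)[OF L] SR_char[OF L] by (auto simp: RSHull_def)
  have PS: "\<forall>x. length x = 2*n \<longrightarrow> (x \<in> SHull n C) = (UU x \<in> Res C \<inter> Sdual n (Tor n C) \<and> VV x \<in> Sdual n (Res C) \<inter> Tor n C)"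
    using C_char(1)[OF L] SR_char[OF L] SL_char[OF L] C_char(3)[OF L]
    unfolding SHull_def SdualE_def Sdual_def by auto
  have hl: "\<And>x. x \<in> LSHull n C \<Longrightarrow> length x = 2*n" "\<And>x. x \<in> RSHull n C \<Longrightarrow> length x = 2*n"
    "\<And>x. x \<in> SHull n C \<Longrightarrow> length x = 2*n"
    using lens(3)[OF L] by (auto simp: LSHull_def RSHull_def SHull_def)
  have a: "\<And>a. a \<in> Res C \<inter> Sdual n (Res C) \<Longrightarrow> length a = 2*n"
    "\<And>a. a \<in> Res C \<inter> Sdual n (Tor n C) \<Longrightarrow> length a = 2*n" using lS by auto
  have z: "replicate (2*n) False \<in> Sdual n (Res C) \<inter> Tor n C" using zS zT by auto
  have a1: "\<forall>a. a \<in> Res C \<inter> Sdual n (Res C) \<longrightarrow> length a = 2*n"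
   and a2: "\<forall>a. a \<in> Res C \<inter> Sdual n (Tor n C) \<longrightarrow> length a = 2*n" using a by blast+
  have hl1: "\<forall>x. x \<in> LSHull n C \<longrightarrow> length x = 2*n"
   and hl2: "\<forall>x. x \<in> RSHull n C \<longrightarrow> length x = 2*n"
   and hl3: "\<forall>x. x \<in> SHull n C \<longrightarrow> length x = 2*n" using hl by blast+
  note r1 = res_gen[where H="LSHull n C", OF L PL z a1 hl1]
  note r2 = res_gen[where H="RSHull n C", OF L PR zT a2 hl2]
  note r3 = res_gen[where H="SHull n C", OF L PS z a2 hl3]
  have tl: "\<And>v. v \<in> Tor n C \<Longrightarrow> length v = 2*n" using lens(1)[OF L] by blast
  have zRT: "replicate (2*n) False \<in> Res C \<inter> Sdual n (Tor n C)" "replicate (2*n) False \<in> Res C \<inter> Sdual n (Res C)"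
    using zR zS by auto
  have "Tor n (LSHull n C) = Sdual n (Res C) \<inter> Tor n C" unfolding r1(2) using zRT tl by auto
  moreover have "Tor n (RSHull n C) = Tor n C" unfolding r2(2) using zRT tl by auto
  moreover have "Tor n (SHull n C) = Sdual n (Res C) \<inter> Tor n C" unfolding r3(2) using zRT tl by auto
  ultimately show ?thesis using r1(1) r2(1) r3(1) by simp
qed

end
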